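(* Let $G$ be a claw-free graph. Then either $G$ is a quasi-line graph, or there is a vertex $v$ of $G$ with $$\deg_{G^2}(v)\le \omega(G)^2+\frac{\omega(G)+1}{2}$$ such that $N_G(v)$ is a clique in $(G\setminus v)^2$ (i.e. any two distinct vertices of $N_G(v)$ are at distance at most $2$ in $G\setminus v$).
   Context: Graphs are finite and simple. A graph is claw-free if it has no induced $K_{1,3}$. A graph is a quasi-line graph if for every vertex $v$, the subgraph induced by $N_G(v)$ can be covered by two cliques (its vertex set is a union of two cliques). $G^2$ is the graph on $V(G)$ where distinct vertices are adjacent iff at distance at most $2$ in $G$; $\deg_{G^2}(v)$ is the degree of $v$ in $G^2$. $G\setminus v$ is the graph obtained by deleting $v$. $\omega$ is the clique number. *)

theory Defs
  imports Complex_Main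
begin

definition simple_graph :: "'a set \<Rightarrow> ('a \<Rightarrow> 'a \<Rightarrow> bool) \<Rightarrow> bool" where
  "simple_graph V E \<longleftrightarrow> finite V \<and> (\<forall>u v. E u v \<longrightarrow> u \<in> V \<and> v \<in> V)
     \<and> (\<forall>u v. E u v \<longrightarrow> E v u) \<and> (\<forall>v. \<not> E v v)"

definition nbhd :: "'a set \<Rightarrow> ('a \<Rightarrow> 'a \<Rightarrow> bool) \<Rightarrow> 'a \<Rightarrow> 'a set" where
  "nbhd V E v = {u \<in> V. E v u}"

definition is_clique :: "'a set \<Rightarrow> ('a \<Rightarrow> 'a \<Rightarrow> bool) \<Rightarrow> 'a set \<Rightarrow> bool" where
  "is_clique V E K \<longleftrightarrow> K \<subseteq> V \<and> (\<forall>x\<in>K. \<forall>y\<in>K. x \<noteq> y \<longrightarrow> E x y)"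

definition claw_free :: "'a set \<Rightarrow> ('a \<Rightarrow> 'a \<Rightarrow> bool) \<Rightarrow> bool" where
  "claw_free V E \<longleftrightarrow> \<not> (\<exists>v a b c. v \<in> V \<and> a \<in> nbhd V E v \<and> b \<in> nbhd V E v \<and> c \<in> nbhd V E v
      \<and> a \<noteq> b \<and> a \<noteq> c \<and> b \<noteq> c \<and> \<not> E a b \<and> \<not> E a c \<and> \<not> E b c)"

definition quasi_line :: "'a set \<Rightarrow> ('a \<Rightarrow> 'a \<Rightarrow> bool) \<Rightarrow> bool" where
  "quasi_line V E \<longleftrightarrow> (\<forall>v\<in>V. \<exists>K1 K2. is_clique V E K1 \<and> is_clique V E K2 \<and> nbhd V E v = K1 \<union> K2)"

definition clique_number :: "'a set \<Rightarrow> ('a \<Rightarrow> 'a \<Rightarrow> bool) \<Rightarrow> nat" where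
  "clique_number V E = Max (card ` {K. is_clique V E K})"

definition induced :: "'a set \<Rightarrow> ('a \<Rightarrow> 'a \<Rightarrow> bool) \<Rightarrow> 'a \<Rightarrow> 'a \<Rightarrow> bool" where
  "induced S E = (\<lambda>u v. u \<in> S \<and> v \<in> S \<and> E u v)"

definition dist_le2 :: "'a set \<Rightarrow> ('a \<Rightarrow> 'a \<Rightarrow> bool) \<Rightarrow> 'a \<Rightarrow> 'a \<Rightarrow> bool" where
  "dist_le2 V E u v \<longleftrightarrow> E u v \<or> (\<exists>w\<in>V. E u w \<and> E w v)"

definition deg_sq :: "'a set \<Rightarrow> ('a \<Rightarrow> 'a \<Rightarrow> bool) \<Rightarrow> 'a \<Rightarrow> nat" where
  "deg_sq V E v = card {u \<in> V. u \<noteq> v \<and> dist_le2 V E v u}"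

end

theory Submission
  imports Defs
begin


lemma card_le2:
  assumes "finite T" and "\<And>i j l. i\<in>T \<Longrightarrow> j\<in>T \<Longrightarrow> l\<in>T \<Longrightarrow> i\<noteq>j \<Longrightarrow> i\<noteq>l \<Longrightarrow> j\<noteq>l \<Longrightarrow> False"
  shows "card T \<le> 2"
proof (rule ccontr)
  assume "\<not> card T \<le> 2"
  hence "card T \<ge> 3" by simp
  then obtain i where i: "i \<in> T" using assms(1) by (metis card.empty ex_in_conv not_numeral_le_zero)
  have c1: "card (T - {i}) \<ge> 2" using i assms(1) \<open>card T \<ge> 3\<close> by simp
  then obtain j where j: "j \<in> T - {i}" by (metis card.empty ex_in_conv not_numeral_le_zero)
  have "card (T - {i} - {j}) \<ge> 1" using j assms(1) c1 by simp
  then obtain l where l: "l \<in> T - {i} - {j}" by (metis card.empty ex_in_conv not_one_le_zero)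
  show False using assms(2)[of i j l] i j l by auto
qed



definition walk :: "('a \<Rightarrow> 'a \<Rightarrow> bool) \<Rightarrow> (nat \<Rightarrow> 'a) \<Rightarrow> nat \<Rightarrow> bool" where
  "walk R f n \<longleftrightarrow> (\<forall>i<n. R (f i) (f (Suc i)))"

definition app :: "(nat \<Rightarrow> 'a) \<Rightarrow> nat \<Rightarrow> (nat \<Rightarrow> 'a) \<Rightarrow> nat \<Rightarrow> 'a" where
  "app f n g = (\<lambda>i. if i \<le> n then f i else g (i - n))"

lemma walk_app:
  assumes "walk R f n" "walk R g m" "g 0 = f n"
  shows "walk R (app f n g) (n + m)"
  unfolding walk_def
proof (intro allI impI)
  fix i assume i: "i < n + m"
  show "R (app f n g i) (app f n g (Suc i))"
  proof (cases "i < n")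
    case True thus ?thesis using assms(1) by (simp add: walk_def app_def)
  next
    case False
    hence "i - n < m" using i by simp
    hence "R (g (i-n)) (g (Suc (i-n)))" using assms(2) by (simp add: walk_def)
    moreover have "Suc i - n = Suc (i - n)" using False by simp
    ultimately show ?thesis using False assms(3) by (cases "i = n") (auto simp: app_def)
  qed
qed

lemma app_0[simp]: "app f n g 0 = f 0" by (simp add: app_def)
lemma app_end: "g 0 = f n \<Longrightarrow> app f n g (n + m) = g m"
  by (cases m) (auto simp: app_def)

lemma walk_shift:
  assumes "walk R f n" "a \<le> b" "b \<le> n"
  shows "walk R (\<lambda>i. f (a + i)) (b - a)"
  using assms by (auto simp: walk_def)

lemma walk_rev:
  assumes sym: "\<And>x y. R x y \<Longrightarrow> R y x" and "walk R g m"
  shows "walk R (\<lambda>i. g (m - i)) m"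
  unfolding walk_def
proof (intro allI impI)
  fix i assume i: "i < m"
  have "R (g (m - Suc i)) (g (Suc (m - Suc i)))" using assms(2) i by (simp add: walk_def)
  moreover have "Suc (m - Suc i) = m - i" using i by simp
  ultimately show "R (g (m - i)) (g (m - Suc i))" using sym by simp
qed

lemma split_closed:
  assumes sym: "\<And>x y. R x y \<Longrightarrow> R y x"
  and f: "walk R f k" "f k = f 0" and ab: "a \<le> b" "b \<le> k"
  and g: "walk R g m" "g 0 = f b" "g m = f a"
  shows "(\<exists>h. walk R h (b - a + m) \<and> h (b - a + m) = h 0) \<and>
         (\<exists>h. walk R h (k - b + a + m) \<and> h (k - b + a + m) = h 0)"
proof
  let ?s = "\<lambda>i. f (a + i)"
  have s: "walk R ?s (b - a)" using walk_shift[OF f(1) ab] .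
  have j: "g 0 = ?s (b - a)" using g(2) ab by simp
  have "walk R (app ?s (b-a) g) (b - a + m)" using walk_app[OF s g(1) j] .
  moreover have "app ?s (b-a) g (b - a + m) = app ?s (b-a) g 0"
    using app_end[of g ?s "b-a" m, OF j] g(3) by simp
  ultimately show "\<exists>h. walk R h (b - a + m) \<and> h (b - a + m) = h 0" by blast
next
  let ?s1 = "\<lambda>i. f (b + i)"
  let ?s2 = "\<lambda>i. f (0 + i)"
  let ?r = "\<lambda>i. g (m - i)"
  have s1: "walk R ?s1 (k - b)" using walk_shift[OF f(1) ab(2) order.refl] .
  have s2: "walk R ?s2 (a - 0)" using walk_shift[OF f(1), of 0 a] ab by simp
  have j1: "?s2 0 = ?s1 (k - b)" using f(2) ab by simp
  have w12: "walk R (app ?s1 (k-b) ?s2) (k - b + (a - 0))" using walk_app[OF s1 s2 j1] .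
  have e12: "app ?s1 (k-b) ?s2 (k - b + (a - 0)) = f a" using app_end[of ?s2 ?s1 "k-b" "a-0", OF j1] by simp
  have r: "walk R ?r m" using walk_rev[OF sym g(1)] .
  have j2: "?r 0 = app ?s1 (k-b) ?s2 (k - b + (a - 0))" using e12 g(3) by simp
  have w: "walk R (app (app ?s1 (k-b) ?s2) (k - b + (a - 0)) ?r) (k - b + (a - 0) + m)"
    using walk_app[OF w12 r j2] .
  have e: "app (app ?s1 (k-b) ?s2) (k - b + (a - 0)) ?r (k - b + (a - 0) + m) = f b"
    using app_end[of ?r "app ?s1 (k-b) ?s2" "k - b + (a - 0)" m, OF j2] g(2) by simp
  have "k - b + (a - 0) + m = k - b + a + m" by simp
  moreover have "app (app ?s1 (k-b) ?s2) (k - b + (a - 0)) ?r 0 = f b" by simp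
  ultimately show "\<exists>h. walk R h (k - b + a + m) \<and> h (k - b + a + m) = h 0"
    using w e by (intro exI[of _ "app (app ?s1 (k-b) ?s2) (k - b + (a - 0)) ?r"]) simp
qed



definition oddcw :: "('a \<Rightarrow> 'a \<Rightarrow> bool) \<Rightarrow> nat \<Rightarrow> bool" where
  "oddcw R n \<longleftrightarrow> odd n \<and> (\<exists>h. walk R h n \<and> h n = h 0)"

locale cfg =
  fixes V :: "'a set" and E :: "'a \<Rightarrow> 'a \<Rightarrow> bool" and v :: 'a
  assumes sg: "simple_graph V E" and cf: "claw_free V E" and vV: "v \<in> V"
begin

lemma Esym: "E a b \<Longrightarrow> E b a" using sg unfolding simple_graph_def by blast
lemma Eirr: "\<not> E a a" using sg unfolding simple_graph_def by blast
lemma EV: "E a b \<Longrightarrow> a \<in> V \<and> b \<in> V" using sg unfolding simple_graph_def by blast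
lemma finV: "finite V" using sg unfolding simple_graph_def by blast

lemma claw:
  assumes "E c a" "E c b" "E c d" "a \<noteq> b" "a \<noteq> d" "b \<noteq> d" "\<not> E a b" "\<not> E a d" "\<not> E b d"
  shows False
proof -
  have "c \<in> V" "a \<in> nbhd V E c" "b \<in> nbhd V E c" "d \<in> nbhd V E c"
    using assms(1-3) EV unfolding nbhd_def by auto
  thus False using cf assms(4-9) unfolding claw_free_def by blast
qed

definition N where "N = nbhd V E v"
definition H where "H a b \<longleftrightarrow> a \<in> N \<and> b \<in> N \<and> a \<noteq> b \<and> \<not> E a b"

lemma N_iff: "x \<in> N \<longleftrightarrow> E v x" using EV unfolding N_def nbhd_def by auto
lemma NV: "N \<subseteq> V" unfolding N_def nbhd_def by auto
lemma Hsym: "H a b \<Longrightarrow> H b a" unfolding H_def using Esym by blast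
lemma Htri: "H a b \<Longrightarrow> H b c \<Longrightarrow> H a c \<Longrightarrow> False"
  unfolding H_def N_iff using claw[of v a b c] Esym by metis
lemma NE: "a \<in> N \<Longrightarrow> b \<in> N \<Longrightarrow> a \<noteq> b \<Longrightarrow> \<not> H a b \<Longrightarrow> E a b"
  unfolding H_def by simp

lemma clique_le: "is_clique V E K \<Longrightarrow> card K \<le> clique_number V E"
proof -
  assume K: "is_clique V E K"
  have "{K. is_clique V E K} \<subseteq> Pow V" unfolding is_clique_def by auto
  hence "finite {K. is_clique V E K}" using finV by (meson finite_Pow_iff finite_subset)
  hence "finite (card ` {K. is_clique V E K})" by simp
  moreover have "card K \<in> card ` {K. is_clique V E K}" using K by simp
  ultimately show ?thesis unfolding clique_number_def by (rule Max_ge)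
qed

lemma cond2:
  assumes nq: "\<not> (\<exists>K1 K2. is_clique V E K1 \<and> is_clique V E K2 \<and> N = K1 \<union> K2)"
  and x: "x \<in> N" and y: "y \<in> N" and xy: "x \<noteq> y"
  shows "dist_le2 (V - {v}) (induced (V - {v}) E) x y"
proof (rule ccontr)
  assume nd: "\<not> ?thesis"
  have xv: "x \<noteq> v" "y \<noteq> v" using x y Eirr N_iff by auto
  have nxy: "\<not> E x y" using nd xv x y NV unfolding dist_le2_def induced_def by auto
  have nc: "\<not> (E x z \<and> E z y)" if "z \<in> N" for z
  proof
    assume "E x z \<and> E z y"
    moreover have "z \<noteq> v" using that N_iff Eirr by auto
    ultimately show False using nd xv x y NV that unfolding dist_le2_def induced_def by auto
  qed
  define K1 where "K1 = {z \<in> N. H x z}"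
  define K2 where "K2 = {z \<in> N. H y z}"
  have c1: "is_clique V E K1" unfolding is_clique_def K1_def
  proof (intro conjI ballI impI)
    fix a b assume a: "a \<in> {z \<in> N. H x z}" and b: "b \<in> {z \<in> N. H x z}" and ab: "a \<noteq> b"
    have "\<not> H a b" using Htri[of x a b] Hsym a b by blast
    thus "E a b" using NE[of a b] a b ab by blast
  qed (use NV in auto)
  have c2: "is_clique V E K2" unfolding is_clique_def K2_def
  proof (intro conjI ballI impI)
    fix a b assume a: "a \<in> {z \<in> N. H y z}" and b: "b \<in> {z \<in> N. H y z}" and ab: "a \<noteq> b"
    have "\<not> H a b" using Htri[of y a b] Hsym a b by blast
    thus "E a b" using NE[of a b] a b ab by blast
  qed (use NV in auto)
  have "N = K1 \<union> K2"
  proof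
    show "N \<subseteq> K1 \<union> K2"
    proof
      fix z assume z: "z \<in> N"
      show "z \<in> K1 \<union> K2"
      proof (cases "z = x \<or> z = y")
        case True thus ?thesis using x y xy nxy Esym unfolding K1_def K2_def H_def by auto
      next
        case False
        thus ?thesis using nc[OF z] x y z Esym unfolding K1_def K2_def H_def by auto
      qed
    qed
  qed (auto simp: K1_def K2_def)
  thus False using nq c1 c2 by blast
qed

end



context cfg begin

definition Rp where "Rp a b p \<longleftrightarrow> (\<exists>f n. walk H f n \<and> f 0 = a \<and> f n = b \<and> odd n = p)"

lemma Rp_refl: "Rp a a False"
  unfolding Rp_def by (rule exI[of _ "\<lambda>_. a"], rule exI[of _ 0]) (simp add: walk_def)

lemma Rp_step: "H a b \<Longrightarrow> Rp a b True"
  unfolding Rp_def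
  by (rule exI[of _ "\<lambda>i. if i = 0 then a else b"], rule exI[of _ 1]) (simp add: walk_def)

lemma Rp_rev: "Rp a b p \<Longrightarrow> Rp b a p"
proof -
  assume "Rp a b p"
  then obtain f n where f: "walk H f n" "f 0 = a" "f n = b" "odd n = p" unfolding Rp_def by blast
  have "walk H (\<lambda>i. f (n - i)) n" using walk_rev[OF _ f(1)] Hsym by blast
  thus ?thesis unfolding Rp_def using f by (intro exI[of _ "\<lambda>i. f (n - i)"] exI[of _ n]) simp
qed

lemma Rp_trans: "Rp a b p \<Longrightarrow> Rp b c q \<Longrightarrow> Rp a c (p \<noteq> q)"
proof -
  assume "Rp a b p" "Rp b c q"
  then obtain f n g m where f: "walk H f n" "f 0 = a" "f n = b" "odd n = p"
    and g: "walk H g m" "g 0 = b" "g m = c" "odd m = q" unfolding Rp_def by blast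
  have j: "g 0 = f n" using f g by simp
  have "walk H (app f n g) (n + m)" using walk_app[OF f(1) g(1) j] .
  moreover have "app f n g (n + m) = c" using app_end[of g f n m, OF j] g by simp
  moreover have "odd (n + m) = (p \<noteq> q)" using f(4) g(4) by auto
  ultimately show ?thesis unfolding Rp_def using f(2) by (intro exI[of _ "app f n g"] exI[of _ "n+m"]) simp
qed

lemma Rp_odd: "Rp a a True \<Longrightarrow> oddcw H n' \<or> (\<exists>n. oddcw H n)"
  unfolding Rp_def oddcw_def by metis

definition comp where "comp a = {b. \<exists>p. Rp a b p}"
definition rt where "rt a = (SOME x. x \<in> comp a)"

lemma comp_eq: "Rp a b p \<Longrightarrow> comp a = comp b"
  unfolding comp_def using Rp_trans Rp_rev by blast

lemma rt_in: "\<exists>p. Rp (rt a) a p"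
proof -
  have "a \<in> comp a" unfolding comp_def using Rp_refl by blast
  hence "rt a \<in> comp a" unfolding rt_def by (rule someI)
  thus ?thesis unfolding comp_def using Rp_rev by blast
qed

lemma bip:
  assumes nq: "\<not> (\<exists>K1 K2. is_clique V E K1 \<and> is_clique V E K2 \<and> N = K1 \<union> K2)"
  shows "\<exists>n. oddcw H n"
proof (rule ccontr)
  assume no: "\<not> (\<exists>n. oddcw H n)"
  have noR: "\<not> Rp a a True" for a
    using no unfolding Rp_def oddcw_def by metis
  define K1 where "K1 = {a \<in> N. Rp (rt a) a False}"
  define K2 where "K2 = {a \<in> N. Rp (rt a) a True}"
  have same: "rt a = rt b" if "H a b" for a b
    using comp_eq[OF Rp_step[OF that]] unfolding rt_def by simp
  have c: "is_clique V E {a \<in> N. Rp (rt a) a p}" for p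
    unfolding is_clique_def
  proof (intro conjI ballI impI)
    fix a b assume a: "a \<in> {a \<in> N. Rp (rt a) a p}" and b: "b \<in> {a \<in> N. Rp (rt a) a p}" and ab: "a \<noteq> b"
    show "E a b"
    proof (rule ccontr)
      assume "\<not> E a b"
      hence h: "H a b" using a b ab unfolding H_def by simp
      have r: "rt b = rt a" using same[OF h] by simp
      have "Rp (rt a) b (p \<noteq> True)" using Rp_trans[OF _ Rp_step[OF h]] a by simp
      moreover have "Rp b (rt a) p" using Rp_rev b r by simp
      ultimately have "Rp (rt a) (rt a) ((p \<noteq> True) \<noteq> p)" by (rule Rp_trans)
      thus False using noR by simp
    qed
  qed (use NV in auto)
  have "N = K1 \<union> K2" unfolding K1_def K2_def
  proof (intro equalityI subsetI)
    fix x assume "x \<in> N"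
    obtain p where "Rp (rt x) x p" using rt_in by blast
    thus "x \<in> {a \<in> N. Rp (rt a) a False} \<union> {a \<in> N. Rp (rt a) a True}" using \<open>x \<in> N\<close> by (cases p) auto
  qed auto
  thus False using nq c[of False] c[of True] unfolding K1_def K2_def by blast
qed

end




lemma arA: "\<lbrakk>(odd d \<longrightarrow> k \<le> d) \<and> (odd (k-d) \<longrightarrow> k \<le> k-d); 0<d; d<(k::nat); odd k\<rbrakk> \<Longrightarrow> False"
  by (cases "odd d") auto
lemma arB: "\<lbrakk>(odd (d+1) \<longrightarrow> k \<le> d+1) \<and> (odd (k-d+1) \<longrightarrow> k \<le> k-d+1); 0<d; d<(k::nat); odd k; d \<noteq> 1; d \<noteq> k - 1\<rbrakk> \<Longrightarrow> False"
  by (cases "odd d") auto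
lemma arC: "\<lbrakk>(odd (d+2) \<longrightarrow> k \<le> d+2) \<and> (odd (k-d+2) \<longrightarrow> k \<le> k-d+2); 0<d; d<(k::nat); odd k; d \<noteq> 1; d \<noteq> k - 1\<rbrakk> \<Longrightarrow> (d = 2 \<or> d = k - 2)"
  by (cases "odd d") auto
lemma arD: "\<lbrakk>d1 = 2 \<or> d1 = k - 2; d2 = 2 \<or> d2 = k - 2; d1 + d2 = 2 \<or> d1 + d2 = k - 2; d1 + d2 < (k::nat); odd k; 5 \<le> k\<rbrakk> \<Longrightarrow> False"
proof -
  assume "odd k" hence "k \<noteq> 6" by auto
  thus "\<lbrakk>d1 = 2 \<or> d1 = k - 2; d2 = 2 \<or> d2 = k - 2; d1 + d2 = 2 \<or> d1 + d2 = k - 2; d1 + d2 < (k::nat); odd k; 5 \<le> k\<rbrakk> \<Longrightarrow> False"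
    by (elim disjE) auto
qed
lemma arF: "\<lbrakk>odd (k::nat); k \<noteq> 1; k \<noteq> 3\<rbrakk> \<Longrightarrow> 5 \<le> k"
  by (elim oddE) auto

context cfg begin

lemma cycle:
  assumes ex: "\<exists>n. oddcw H n"
  shows "\<exists>f k. 5 \<le> k \<and> walk H f k \<and> f k = f 0 \<and> (\<forall>i j. i<j \<and> j<k \<longrightarrow> f i \<noteq> f j)
     \<and> (\<forall>i j. i<j \<and> j<k \<and> j \<noteq> Suc i \<and> \<not>(i = 0 \<and> j = k - 1) \<longrightarrow> \<not> H (f i) (f j))
     \<and> (\<forall>u i j l. i<j \<and> j<l \<and> l<k \<and> H u (f i) \<and> H u (f j) \<longrightarrow> \<not> H u (f l))"
proof -
  define k where "k = (LEAST n. oddcw H n)"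
  have ok: "oddcw H k" unfolding k_def using ex by (rule LeastI_ex)
  have mn: "oddcw H n \<Longrightarrow> k \<le> n" for n unfolding k_def by (rule Least_le)
  obtain f where f: "walk H f k" "f k = f 0" and kodd: "odd k" using ok unfolding oddcw_def by blast
  have msplit: "(odd (b-a+m) \<longrightarrow> k \<le> b-a+m) \<and> (odd (k-b+a+m) \<longrightarrow> k \<le> k-b+a+m)"
    if "a \<le> b" "b \<le> k" "walk H g m" "g 0 = f b" "g m = f a" for a b g m
    using split_closed[of H f k a b g m, OF Hsym f that] mn unfolding oddcw_def by blast
  have fN: "f i \<in> N" if "i \<le> k" for i
  proof (cases "i < k")
    case True thus ?thesis using f(1) unfolding walk_def H_def by blast
  next
    case False
    hence "i = k" using that by simp
    moreover have "0 < k" using kodd by (cases k) auto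
    ultimately show ?thesis using f unfolding walk_def H_def by auto
  qed
  have k1: "k \<noteq> 1"
  proof
    assume "k = 1"
    hence "H (f 0) (f 1)" using f(1) unfolding walk_def by auto
    thus False using f(2) \<open>k = 1\<close> unfolding H_def by simp
  qed
  have k3: "k \<noteq> 3"
  proof
    assume k: "k = 3"
    have "H (f 0) (f 1)" "H (f 1) (f 2)" "H (f 2) (f 3)" using f(1) k unfolding walk_def
      by (auto simp: numeral_eq_Suc)
    moreover have "f 3 = f 0" using f(2) k by simp
    ultimately show False using Htri[of "f 0" "f 1" "f 2"] Hsym by auto
  qed
  have k5: "5 \<le> k" using kodd k1 k3 by (rule arF)
  have dist: "f i \<noteq> f j" if "i < j" "j < k" for i j
  proof
    assume e: "f i = f j"
    have w0: "walk H (\<lambda>_. f j) 0" by (simp add: walk_def)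
    have m: "(odd (j-i+0) \<longrightarrow> k \<le> j-i+0) \<and> (odd (k-j+i+0) \<longrightarrow> k \<le> k-j+i+0)"
      by (rule msplit[of i j "\<lambda>_. f j" 0, OF _ _ w0]) (use that e in auto)
    have "k - j + i = k - (j - i)" using that by simp
    with m have m': "(odd (j-i) \<longrightarrow> k \<le> j-i) \<and> (odd (k-(j-i)) \<longrightarrow> k \<le> k-(j-i))" by simp
    show False by (rule arA[OF m']) (use that kodd in auto)
  qed
  have chord: "\<not> H (f i) (f j)" if "i < j" "j < k" "j \<noteq> Suc i" "\<not>(i = 0 \<and> j = k - 1)" for i j
  proof
    assume h: "H (f i) (f j)"
    let ?g = "\<lambda>n::nat. if n = 0 then f j else f i"
    have w1: "walk H ?g 1" using Hsym[OF h] by (simp add: walk_def)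
    have m: "(odd (j-i+1) \<longrightarrow> k \<le> j-i+1) \<and> (odd (k-j+i+1) \<longrightarrow> k \<le> k-j+i+1)"
      by (rule msplit[of i j ?g 1, OF _ _ w1]) (use that in auto)
    have "k - j + i = k - (j - i)" using that by simp
    with m have m': "(odd (j-i+1) \<longrightarrow> k \<le> j-i+1) \<and> (odd (k-(j-i)+1) \<longrightarrow> k \<le> k-(j-i)+1)" by simp
    show False by (rule arB[OF m']) (use that kodd in auto)
  qed
  have pair: "(j - i = 2 \<or> j - i = k - 2)" if "i < j" "j < k" "H u (f i)" "H u (f j)" for u i j
  proof -
    let ?g = "\<lambda>n::nat. if n = 0 then f j else if n = 1 then u else f i"
    have w2: "walk H ?g 2" using Hsym[OF that(4)] that(3) by (auto simp: walk_def less_2_cases_iff)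
    have m0: "(odd (j-i+2) \<longrightarrow> k \<le> j-i+2) \<and> (odd (k-j+i+2) \<longrightarrow> k \<le> k-j+i+2)"
      by (rule msplit[of i j ?g 2, OF _ _ w2]) (use that in auto)
    have "k - j + i = k - (j - i)" using that by simp
    with m0 have m: "(odd (j-i+2) \<longrightarrow> k \<le> j-i+2) \<and> (odd (k-(j-i)+2) \<longrightarrow> k \<le> k-(j-i)+2)" by simp
    have n1: "j \<noteq> Suc i"
    proof
      assume "j = Suc i"
      hence "H (f i) (f j)" using f(1) that unfolding walk_def by auto
      thus False using Htri[of u "f i" "f j"] that by blast
    qed
    have n2: "\<not>(i = 0 \<and> j = k - 1)"
    proof
      assume a: "i = 0 \<and> j = k - 1"
      have "Suc (k-1) = k" using k5 by simp
      hence "H (f j) (f k)" using f(1) that a unfolding walk_def by (metis lessI)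
      hence "H (f j) (f i)" using f(2) a by simp
      thus False using Htri[of u "f j" "f i"] that by blast
    qed
    moreover have "j - i \<noteq> 1" "j - i \<noteq> k - 1" using that n1 n2 by auto
    ultimately show ?thesis using that kodd by (intro arC[OF m]) auto
  qed
  have three: "\<not> H u (f l)" if "i<j" "j<l" "l<k" "H u (f i)" "H u (f j)" for u i j l
  proof
    assume h: "H u (f l)"
    have "j < k" using that by simp
    have a1: "j - i = 2 \<or> j - i = k - 2" by (rule pair[OF that(1) \<open>j < k\<close> that(4) that(5)])
    have a2: "l - j = 2 \<or> l - j = k - 2" by (rule pair[OF that(2) that(3) that(5) h])
    have "i < l" using that by simp
    have a3: "l - i = 2 \<or> l - i = k - 2" by (rule pair[OF \<open>i < l\<close> that(3) that(4) h])
    have e: "l - i = (j - i) + (l - j)" using that by simp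
    have lt: "(j - i) + (l - j) < k" using that by simp
    show False by (rule arD[OF a1 a2 _ lt kodd k5]) (use a3 e in simp)
  qed
  have D: "\<forall>i j. i<j \<and> j<k \<longrightarrow> f i \<noteq> f j" using dist by blast
  have C: "\<forall>i j. i<j \<and> j<k \<and> j \<noteq> Suc i \<and> \<not>(i = 0 \<and> j = k - 1) \<longrightarrow> \<not> H (f i) (f j)"
    using chord by blast
  have T: "\<forall>u i j l. i<j \<and> j<l \<and> l<k \<and> H u (f i) \<and> H u (f j) \<longrightarrow> \<not> H u (f l)"
    using three by blast
  show ?thesis
    apply (rule exI[of _ f], rule exI[of _ k])
    apply (intro conjI)
    apply (rule k5)
    apply (rule f(1))
    apply (rule f(2))
    apply (rule D)
    apply (rule C)
    apply (rule T)
    done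
qed

end



lemma ramsey:
  assumes sg: "simple_graph V E"
  shows "S \<subseteq> V \<Longrightarrow> (\<forall>a\<in>S. \<forall>b\<in>S. \<forall>c\<in>S. a\<noteq>b \<and> a\<noteq>c \<and> b\<noteq>c \<longrightarrow> E a b \<or> E a c \<or> E b c)
    \<Longrightarrow> (\<forall>K. K \<subseteq> S \<and> is_clique V E K \<longrightarrow> card K \<le> t) \<Longrightarrow> 2 * card S \<le> t * (t + 3)"
proof (induction t arbitrary: S)
  case 0
  show ?case
  proof (cases "S = {}")
    case False
    then obtain x where x: "x \<in> S" by blast
    have "is_clique V E {x}" using x 0(1) unfolding is_clique_def by auto
    hence "card {x} \<le> 0" using 0(3) x by blast
    thus ?thesis by simp
  qed simp
next
  case (Suc t)
  have finS: "finite S" using Suc.prems(1) sg unfolding simple_graph_def by (meson finite_subset)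
  have irr: "\<not> E a a" for a using sg unfolding simple_graph_def by blast
  have sym: "E a b \<Longrightarrow> E b a" for a b using sg unfolding simple_graph_def by blast
  show ?case
  proof (cases "S = {}")
    case False
    then obtain x where x: "x \<in> S" by blast
    define A where "A = {y \<in> S. E x y}"
    define B where "B = {y \<in> S. y \<noteq> x \<and> \<not> E x y}"
    have Sd: "S = insert x (A \<union> B)" unfolding A_def B_def using x by auto
    have finA: "finite A" "finite B" using finS unfolding A_def B_def by auto
    have "card S \<le> Suc (card (A \<union> B))" by (subst Sd) (simp add: card_insert_if finA)
    also have "\<dots> \<le> Suc (card A + card B)" using card_Un_le[of A B] by simp
    finally have cS: "card S \<le> Suc (card A + card B)" .
    have Bc: "is_clique V E B" unfolding is_clique_def
    proof (intro conjI ballI impI)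
      fix a b assume a: "a \<in> B" and b: "b \<in> B" and ab: "a \<noteq> b"
      have a': "a \<in> S" "a \<noteq> x" "\<not> E x a" using a unfolding B_def by auto
      have b': "b \<in> S" "b \<noteq> x" "\<not> E x b" using b unfolding B_def by auto
      have "E x a \<or> E x b \<or> E a b" using Suc.prems(2)[rule_format, OF x a'(1) b'(1)] a' b' ab by auto
      thus "E a b" using a' b' by auto
    qed (use Suc.prems(1) B_def in auto)
    have cB: "card B \<le> Suc t" using Suc.prems(3) Bc unfolding B_def by auto
    have "2 * card A \<le> t * (t + 3)"
    proof (rule Suc.IH)
      show "A \<subseteq> V" using Suc.prems(1) unfolding A_def by auto
      show "\<forall>a\<in>A. \<forall>b\<in>A. \<forall>c\<in>A. a\<noteq>b \<and> a\<noteq>c \<and> b\<noteq>c \<longrightarrow> E a b \<or> E a c \<or> E b c"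
      proof (intro ballI impI)
        fix a b c assume "a \<in> A" "b \<in> A" "c \<in> A" "a \<noteq> b \<and> a \<noteq> c \<and> b \<noteq> c"
        thus "E a b \<or> E a c \<or> E b c" using Suc.prems(2)[rule_format, of a b c] unfolding A_def by auto
      qed
      show "\<forall>K. K \<subseteq> A \<and> is_clique V E K \<longrightarrow> card K \<le> t"
      proof (intro allI impI)
        fix K assume K: "K \<subseteq> A \<and> is_clique V E K"
        have xK: "x \<notin> K" using K irr unfolding A_def by auto
        have "is_clique V E (insert x K)" using K x Suc.prems(1) sym unfolding is_clique_def A_def by auto
        moreover have "insert x K \<subseteq> S" using K x unfolding A_def by auto
        ultimately have "card (insert x K) \<le> Suc t" using Suc.prems(3) by blast
        moreover have "finite K" using K finA(1) finite_subset by blast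
        ultimately show "card K \<le> t" using xK by simp
      qed
    qed
    note IHA = this
    have "2 * card S \<le> 2 * card A + 2 * card B + 2" using cS by linarith
    also have "\<dots> \<le> t*(t+3) + 2 * card B + 2" using IHA by linarith
    also have "\<dots> \<le> t*(t+3) + 2*(Suc t) + 2" using cB by simp
    finally have "2 * card S \<le> t*(t+3) + 2*(Suc t) + 2" .
    moreover have "t*(t+3) + 2*(Suc t) + 2 = Suc t * (Suc t + 3)" by (simp add: algebra_simps)
    ultimately show ?thesis by simp
  qed simp
qed

context cfg begin

lemma dom:
  assumes k5: "5 \<le> k" and fw: "walk H f k" and fk: "f k = f 0"
  and D: "\<forall>i j. i<j \<and> j<k \<longrightarrow> f i \<noteq> f j"
  and C: "\<forall>i j. i<j \<and> j<k \<and> j \<noteq> Suc i \<and> \<not>(i = 0 \<and> j = k - 1) \<longrightarrow> \<not> H (f i) (f j)"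
  and T: "\<forall>u i j l. i<j \<and> j<l \<and> l<k \<and> H u (f i) \<and> H u (f j) \<longrightarrow> \<not> H u (f l)"
  and w: "w \<in> V" "\<not> E v w" "w \<noteq> v" and u: "u \<in> N" "E u w"
  shows "E (f 0) w \<or> E (f 1) w \<or> E (f 2) w"
proof -
  have Hs: "H (f i) (f (Suc i))" if "i < k" for i using fw that unfolding walk_def by blast
  have fN: "f i \<in> N" if "i < k" for i using Hs[OF that] unfolding H_def by blast
  have wN: "w \<notin> N" using w N_iff by auto
  have Ef: "E (f i) (f j)" if "i < j" "j < k" "j \<noteq> Suc i" "\<not>(i = 0 \<and> j = k - 1)" for i j
    using NE[of "f i" "f j"] fN that D C by auto
  have step1: "\<exists>i<k. E (f i) w"
  proof (cases "u \<in> f ` {..<k}")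
    case True thus ?thesis using u by auto
  next
    case False
    define Ts where "Ts = {i. i < k \<and> H u (f i)}"
    have finT: "finite Ts" unfolding Ts_def by simp
    have no3: "i \<noteq> j \<Longrightarrow> i \<noteq> l \<Longrightarrow> j \<noteq> l \<Longrightarrow> False" if "i \<in> Ts" "j \<in> Ts" "l \<in> Ts" for i j l
    proof -
      have s: "False" if "a < b" "b < c" "a \<in> Ts" "b \<in> Ts" "c \<in> Ts" for a b c
        using T that unfolding Ts_def by blast
      assume "i \<noteq> j" "i \<noteq> l" "j \<noteq> l"
      thus False using s that by (metis linorder_neqE_nat)
    qed
    have cT: "card Ts \<le> 2" using card_le2[OF finT] no3 by blast
    define p where "p i = (if i = 0 then k - 1 else i - 1)" for i :: nat
    have "\<exists>j<k. \<not> H u (f j) \<and> \<not> H u (f (Suc j))"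
    proof (rule ccontr)
      assume "\<not> ?thesis"
      hence all: "\<forall>j<k. H u (f j) \<or> H u (f (Suc j))" by blast
      have "{..<k} \<subseteq> Ts \<union> p ` Ts"
      proof
        fix j assume j: "j \<in> {..<k}"
        show "j \<in> Ts \<union> p ` Ts"
        proof (cases "H u (f j)")
          case True thus ?thesis using j unfolding Ts_def by auto
        next
          case False
          hence h: "H u (f (Suc j))" using all j by auto
          show ?thesis
          proof (cases "Suc j < k")
            case True
            hence "Suc j \<in> Ts" using h unfolding Ts_def by auto
            moreover have "p (Suc j) = j" unfolding p_def by simp
            ultimately show ?thesis by (metis UnI2 imageI)
          next
            case False
            hence "Suc j = k" using j by simp
            hence "0 \<in> Ts" using h fk k5 unfolding Ts_def by auto
            moreover have "p 0 = j" unfolding p_def using \<open>Suc j = k\<close> by simp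
            ultimately show ?thesis by (metis UnI2 imageI)
          qed
        qed
      qed
      hence "card {..<k} \<le> card (Ts \<union> p ` Ts)" using finT by (intro card_mono) auto
      also have "\<dots> \<le> card Ts + card (p ` Ts)" by (rule card_Un_le)
      also have "\<dots> \<le> card Ts + card Ts" using card_image_le[OF finT, of p] by simp
      finally show False using cT k5 by simp
    qed
    then obtain j where j: "j < k" "\<not> H u (f j)" "\<not> H u (f (Suc j))" by blast
    have fSN: "f (Suc j) \<in> N" using Hs[OF j(1)] unfolding H_def by blast
    have un1: "u \<noteq> f j" using False j by auto
    have un2: "u \<noteq> f (Suc j)"
    proof (cases "Suc j < k")
      case True thus ?thesis using False by auto
    next
      case False
      hence "Suc j = k" using j by simp
      thus ?thesis using \<open>u \<notin> f ` {..<k}\<close> fk k5 by auto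
    qed
    have e1: "E u (f j)" using NE[OF u(1) fN[OF j(1)] un1] j by blast
    have e2: "E u (f (Suc j))" using NE[OF u(1) fSN un2] j by blast
    have hs: "H (f j) (f (Suc j))" using Hs j by blast
    have "E w (f j) \<or> E w (f (Suc j))"
    proof (rule ccontr)
      assume nn: "\<not> ?thesis"
      have "w \<noteq> f j" "w \<noteq> f (Suc j)" using wN fN[OF j(1)] fSN by auto
      thus False using claw[OF u(2) e1 e2] nn hs unfolding H_def by blast
    qed
    thus ?thesis
    proof
      assume "E w (f j)" thus ?thesis using j Esym by blast
    next
      assume e: "E w (f (Suc j))"
      show ?thesis
      proof (cases "Suc j < k")
        case True thus ?thesis using e Esym by blast
      next
        case False
        hence "Suc j = k" using j by simp
        hence "E (f 0) w" using e fk Esym by auto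
        moreover have "0 < k" using k5 by simp
        ultimately show ?thesis by blast
      qed
    qed
  qed
  then obtain i where i: "i < k" "E (f i) w" by blast
  have wf: "w \<noteq> f a" if "a < k" for a using wN fN[OF that] by auto
  show ?thesis
  proof (cases "i \<le> 2")
    case True
    hence "i = 0 \<or> i = 1 \<or> i = 2" by auto
    thus ?thesis using i by auto
  next
    case False
    show ?thesis
    proof (cases "i = k - 1")
      case True
      have a1: "E (f i) (f 1)" using Ef[of 1 i] True k5 Esym by auto
      have a2: "E (f i) (f 2)" using Ef[of 2 i] True k5 Esym by auto
      have h12: "H (f 1) (f 2)" using Hs[of 1] k5 by (simp add: numeral_2_eq_2)
      have "E w (f 1) \<or> E w (f 2)"
      proof (rule ccontr)
        assume nn: "\<not> ?thesis"
        thus False using claw[OF i(2) a1 a2] wf[of 1] wf[of 2] k5 h12 unfolding H_def by auto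
      qed
      thus ?thesis using Esym by blast
    next
      case F2: False
      have a1: "E (f i) (f 0)" using Ef[of 0 i] F2 False i(1) Esym by auto
      have a2: "E (f i) (f 1)" using Ef[of 1 i] F2 False i(1) Esym by auto
      have h12: "H (f 0) (f 1)" using Hs[of 0] k5 by simp
      have "E w (f 0) \<or> E w (f 1)"
      proof (rule ccontr)
        assume nn: "\<not> ?thesis"
        thus False using claw[OF i(2) a1 a2] wf[of 0] wf[of 1] k5 h12 unfolding H_def by auto
      qed
      thus ?thesis using Esym by blast
    qed
  qed
qed

end



lemma final_arith:
  fixes D n t :: nat
  assumes "2 * n \<le> t * (t + 3)" "D \<le> n + 3 * t"
  shows "real D \<le> real (t + 1) ^ 2 + (real (t + 1) + 1) / 2"
proof -
  have a: "2 * real n \<le> real t * (real t + 3)" using assms(1)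
    by (metis of_nat_le_iff of_nat_mult of_nat_add of_nat_numeral)
  have b: "real D \<le> real n + 3 * real t" using assms(2)
    by (metis of_nat_le_iff of_nat_mult of_nat_add of_nat_numeral)
  have c: "0 \<le> (real t - 2)^2" by simp
  have "real D \<le> (real t * (real t + 3)) / 2 + 3 * real t" using a b by linarith
  also have "\<dots> \<le> real (t + 1) ^ 2 + (real (t + 1) + 1) / 2"
  proof -
    have "2 * (real (t + 1) ^ 2 + (real (t + 1) + 1) / 2) - 2 * ((real t * (real t + 3)) / 2 + 3 * real t) = (real t - 2)^2"
      by (simp add: power2_eq_square field_simps)
    moreover have "\<And>X Y Z::real. 2*Y - 2*X = Z \<Longrightarrow> 0 \<le> Z \<Longrightarrow> X \<le> Y" by linarith
    ultimately show ?thesis using c by blast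
  qed
  finally show ?thesis .
qed

context cfg begin

lemma degbound:
  assumes nq: "\<not> (\<exists>K1 K2. is_clique V E K1 \<and> is_clique V E K2 \<and> N = K1 \<union> K2)"
  shows "real (deg_sq V E v) \<le> real (clique_number V E) ^ 2 + (real (clique_number V E) + 1) / 2"
proof -
  obtain f k where all: "5 \<le> k \<and> walk H f k \<and> f k = f 0 \<and> (\<forall>i j. i<j \<and> j<k \<longrightarrow> f i \<noteq> f j)
     \<and> (\<forall>i j. i<j \<and> j<k \<and> j \<noteq> Suc i \<and> \<not>(i = 0 \<and> j = k - 1) \<longrightarrow> \<not> H (f i) (f j))
     \<and> (\<forall>u i j l. i<j \<and> j<l \<and> l<k \<and> H u (f i) \<and> H u (f j) \<longrightarrow> \<not> H u (f l))"
    using cycle[OF bip[OF nq]] by (elim exE) (rule that)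
  note k5 = conjunct1[OF all]
  note fw = conjunct1[OF conjunct2[OF all]]
  note fk = conjunct1[OF conjunct2[OF conjunct2[OF all]]]
  note D = conjunct1[OF conjunct2[OF conjunct2[OF conjunct2[OF all]]]]
  note C = conjunct1[OF conjunct2[OF conjunct2[OF conjunct2[OF conjunct2[OF all]]]]]
  note T = conjunct2[OF conjunct2[OF conjunct2[OF conjunct2[OF conjunct2[OF all]]]]]
  define w where "w = clique_number V E"
  have "is_clique V E {v}" using vV unfolding is_clique_def by auto
  hence "1 \<le> w" using clique_le[of "{v}"] unfolding w_def by simp
  then obtain t where wt: "w = t + 1" by (metis add.commute le_Suc_ex)
  define Kc where "Kc c = {u \<in> V. E c u \<and> \<not> E v u \<and> u \<noteq> v}" for c
  have finV': "finite V" by (rule finV)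
  have finKc: "finite (Kc c)" for c using finV unfolding Kc_def by simp
  have finN: "finite N" using finV NV finite_subset by blast
  have cardK: "card (Kc c) \<le> t" if c: "c \<in> N" for c
  proof -
    have cv: "E c v" using c N_iff Esym by blast
    have "is_clique V E (insert c (Kc c))" unfolding is_clique_def
    proof (intro conjI ballI impI)
      show "insert c (Kc c) \<subseteq> V" using c NV unfolding Kc_def by auto
    next
      fix a b assume a: "a \<in> insert c (Kc c)" and b: "b \<in> insert c (Kc c)" and ab: "a \<noteq> b"
      show "E a b"
      proof (cases "a = c")
        case True thus ?thesis using b ab unfolding Kc_def by auto
      next
        case F1: False
        show ?thesis
        proof (cases "b = c")
          case True thus ?thesis using a F1 Esym unfolding Kc_def by auto
        next
          case False
          have a': "E c a" "\<not> E v a" "a \<noteq> v" using a F1 unfolding Kc_def by auto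
          have b': "E c b" "\<not> E v b" "b \<noteq> v" using b False unfolding Kc_def by auto
          show "E a b"
          proof (rule ccontr)
            assume "\<not> E a b"
            thus False using claw[OF cv a'(1) b'(1)] a' b' ab Esym by blast
          qed
        qed
      qed
    qed
    hence "card (insert c (Kc c)) \<le> w" unfolding w_def by (rule clique_le)
    moreover have "c \<notin> Kc c" using cv Esym unfolding Kc_def by auto
    ultimately show ?thesis using finKc wt by simp
  qed
  have cardN: "2 * card N \<le> t * (t + 3)"
  proof (rule ramsey[OF sg NV])
    show "\<forall>a\<in>N. \<forall>b\<in>N. \<forall>c\<in>N. a\<noteq>b \<and> a\<noteq>c \<and> b\<noteq>c \<longrightarrow> E a b \<or> E a c \<or> E b c"
    proof (intro ballI impI)
      fix a b c assume "a \<in> N" "b \<in> N" "c \<in> N" "a\<noteq>b \<and> a\<noteq>c \<and> b\<noteq>c"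
      thus "E a b \<or> E a c \<or> E b c" using claw[of v a b c] N_iff by blast
    qed
    show "\<forall>K. K \<subseteq> N \<and> is_clique V E K \<longrightarrow> card K \<le> t"
    proof (intro allI impI)
      fix K assume K: "K \<subseteq> N \<and> is_clique V E K"
      have "is_clique V E (insert v K)" using K vV N_iff Esym unfolding is_clique_def by auto
      hence "card (insert v K) \<le> w" unfolding w_def by (rule clique_le)
      moreover have "v \<notin> K" using K N_iff Eirr by auto
      moreover have "finite K" using K finN finite_subset by blast
      ultimately show "card K \<le> t" using wt by simp
    qed
  qed
  have fN: "f i \<in> N" if "i < k" for i using fw that unfolding walk_def H_def by blast
  have sub: "{u \<in> V. u \<noteq> v \<and> dist_le2 V E v u} \<subseteq> N \<union> Kc (f 0) \<union> Kc (f 1) \<union> Kc (f 2)"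
  proof
    fix u assume u: "u \<in> {u \<in> V. u \<noteq> v \<and> dist_le2 V E v u}"
    show "u \<in> N \<union> Kc (f 0) \<union> Kc (f 1) \<union> Kc (f 2)"
    proof (cases "E v u")
      case True thus ?thesis using N_iff by auto
    next
      case False
      then obtain x where x: "x \<in> V" "E v x" "E x u" using u unfolding dist_le2_def by auto
      have xN: "x \<in> N" using x N_iff by auto
      have "E (f 0) u \<or> E (f 1) u \<or> E (f 2) u"
        using dom[OF k5 fw fk D C T _ False _ xN x(3)] u by auto
      thus ?thesis using u False unfolding Kc_def by auto
    qed
  qed
  have "deg_sq V E v \<le> card (N \<union> Kc (f 0) \<union> Kc (f 1) \<union> Kc (f 2))"
    unfolding deg_sq_def using sub finN finKc by (intro card_mono) auto
  also have "\<dots> \<le> card N + card (Kc (f 0)) + card (Kc (f 1)) + card (Kc (f 2))"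
    by (meson add_le_mono card_Un_le le_refl order_trans)
  also have "\<dots> \<le> card N + 3 * t"
    using cardK[OF fN[of 0]] cardK[OF fN[of 1]] cardK[OF fN[of 2]] k5 by simp
  finally have "deg_sq V E v \<le> card N + 3 * t" .
  from final_arith[OF cardN this] show ?thesis unfolding w_def[symmetric] wt by simp
qed

end

theorem mainTheorem2:
  fixes V :: "'a set" and E :: "'a \<Rightarrow> 'a \<Rightarrow> bool"
  assumes "simple_graph V E" and "claw_free V E"
  shows "quasi_line V E \<or>
    (\<exists>v\<in>V. real (deg_sq V E v) \<le> real (clique_number V E) ^ 2 + (real (clique_number V E) + 1) / 2
       \<and> (\<forall>x\<in>nbhd V E v. \<forall>y\<in>nbhd V E v. x \<noteq> y \<longrightarrow>
             dist_le2 (V - {v}) (induced (V - {v}) E) x y))"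
proof (cases "quasi_line V E")
  case False
  then obtain v where vV: "v \<in> V"
    and nq: "\<not> (\<exists>K1 K2. is_clique V E K1 \<and> is_clique V E K2 \<and> nbhd V E v = K1 \<union> K2)"
    unfolding quasi_line_def by blast
  interpret cfg V E v using assms vV by unfold_locales
  have nq': "\<not> (\<exists>K1 K2. is_clique V E K1 \<and> is_clique V E K2 \<and> N = K1 \<union> K2)"
    using nq unfolding N_def .
  have "real (deg_sq V E v) \<le> real (clique_number V E) ^ 2 + (real (clique_number V E) + 1) / 2"
    by (rule degbound[OF nq'])
  moreover have "\<forall>x\<in>nbhd V E v. \<forall>y\<in>nbhd V E v. x \<noteq> y \<longrightarrow> dist_le2 (V - {v}) (induced (V - {v}) E) x y"
    using cond2[OF nq'] unfolding N_def by blast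
  ultimately show ?thesis using vV by blast
qed simp



end
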